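(* Let $(E,\mathcal{E},\nu)$ be a $\sigma$-finite measure space, $\phi$ a Young function satisfying the $\Delta_2$-condition, $w$ a weight function, and $\Psi:E\to E$ a non-singular measurable transformation inducing the composition operator $C_\Psi f=f\circ\Psi$ on the Orlicz-Lorentz space $L_{(\phi,w)}$. For $m\ge0$ let $\nu_m=\nu\circ\Psi^{-m}$. Then $\mathcal{A}(C_\Psi)=\infty$ if and only if the measures $\nu_m$ and $\nu_{m+1}$ are not equivalent for any natural number $m$.
   Context: A Young function is a convex $\phi:[0,\infty)\to[0,\infty)$ with $\phi(x)=0\iff x=0$ and $\lim_{x\to\infty}\phi(x)=\infty$; $\Delta_2$-condition: $\phi(2x)\le k\phi(x)$ for some $k>0$ and all $x>0$. A weight function is a non-increasing locally integrable $w:(0,\infty)\to(0,\infty)$ with $\int_0^\infty w=\infty$. For measurable $f$, $\nu_f(s)=\nu\{|f|>s\}$, $f^*(t)=\inf\{s>0:\nu_f(s)\le t\}$; $L_{(\phi,w)}$ is the space of measurable $f:E\to\mathbb{C}$ with $\int_0^\infty\phi(\alpha f^*(t))w(t)\,dt<\infty$ for some $\alpha>0$, with the Luxemburg norm. $\Psi$ non-singular: $\nu(\Psi^{-1}(S))=0$ whenever $\nu(S)=0$; $\nu\circ\Psi^{-m}(S)=\nu(\Psi^{-m}(S))$, $\Psi^0=\mathrm{id}$. Measures $\nu_1,\nu_2$ are equivalent if $\nu_1\ll\nu_2\ll\nu_1$. The ascent $\mathcal{A}(T)$ is the smallest integer $m$ with $\mathcal{N}(T^m)=\mathcal{N}(T^{m+1})$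 ($\mathcal{N}$ = kernel), and $\infty$ if no such $m$ exists. *)

theory Defs
  imports "HOL-Analysis.Analysis"
begin

definition young_function :: "(real \<Rightarrow> real) \<Rightarrow> bool" where
  "young_function \<phi> \<longleftrightarrow> convex_on {0..} \<phi> \<and> (\<forall>x\<ge>0. \<phi> x \<ge> 0)
     \<and> (\<forall>x\<ge>0. \<phi> x = 0 \<longleftrightarrow> x = 0) \<and> filterlim \<phi> at_top at_top"

definition delta2 :: "(real \<Rightarrow> real) \<Rightarrow> bool" where
  "delta2 \<phi> \<longleftrightarrow> (\<exists>k>0. \<forall>x>0. \<phi> (2 * x) \<le> k * \<phi> x)"

definition weight_function :: "(real \<Rightarrow> real) \<Rightarrow> bool" where
  "weight_function w \<longleftrightarrow> (\<forall>t>0. w t > 0) \<and> antimono_on {0<..} w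
     \<and> (\<forall>a>0. set_integrable lborel {0<..a} w)
     \<and> set_nn_integral lborel {0<..} (\<lambda>t. ennreal (w t)) = \<infinity>"

definition distrib_fun :: "'a measure \<Rightarrow> ('a \<Rightarrow> complex) \<Rightarrow> real \<Rightarrow> ennreal" where
  "distrib_fun M f s = emeasure M {x \<in> space M. norm (f x) > s}"

text \<open>decreasing rearrangement f^*(t), with value \<infinity> allowed (Inf of the empty set)\<close>
definition decr_rearr :: "'a measure \<Rightarrow> ('a \<Rightarrow> complex) \<Rightarrow> real \<Rightarrow> ereal" where
  "decr_rearr M f t = Inf {ereal s | s. s > 0 \<and> distrib_fun M f s \<le> ennreal t}"

text \<open>Orlicz-Lorentz space L_(phi,w), as a set of (representative) functions\<close>
definition orlicz_lorentz :: "'a measure \<Rightarrow> (real \<Rightarrow> real) \<Rightarrow> (real \<Rightarrow> real) \<Rightarrow> ('a \<Rightarrow> complex) set" where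
  "orlicz_lorentz M \<phi> w = {f \<in> borel_measurable M. \<exists>\<alpha>>0.
     set_nn_integral lborel {0<..}
       (\<lambda>t. if decr_rearr M f t = \<infinity> then \<infinity>
            else ennreal (\<phi> (\<alpha> * real_of_ereal (decr_rearr M f t)) * w t)) < \<infinity>}"

definition comp_kernel :: "'a measure \<Rightarrow> ('a \<Rightarrow> complex) set \<Rightarrow> ('a \<Rightarrow> 'a) \<Rightarrow> nat \<Rightarrow> ('a \<Rightarrow> complex) set" where
  "comp_kernel M L \<Psi> m = {f \<in> L. AE x in M. f ((\<Psi> ^^ m) x) = 0}"

definition ascent :: "(nat \<Rightarrow> 'b set) \<Rightarrow> enat" where
  "ascent N = (if \<exists>m. N m = N (Suc m) then enat (LEAST m. N m = N (Suc m)) else \<infinity>)"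

definition nonsingular :: "'a measure \<Rightarrow> ('a \<Rightarrow> 'a) \<Rightarrow> bool" where
  "nonsingular M \<Psi> \<longleftrightarrow> (\<forall>S\<in>sets M. emeasure M S = 0 \<longrightarrow> emeasure M (\<Psi> -` S \<inter> space M) = 0)"

definition equiv_measures :: "'a measure \<Rightarrow> 'a measure \<Rightarrow> bool" where
  "equiv_measures N1 N2 \<longleftrightarrow> absolutely_continuous N1 N2 \<and> absolutely_continuous N2 N1"

end

theory Submission
  imports Defs
begin

lemma funpow_meas: assumes "\<Psi> \<in> M \<rightarrow>\<^sub>M M" shows "(\<Psi> ^^ m) \<in> M \<rightarrow>\<^sub>M M"
proof (induction m)
  case (Suc m)
  have "\<Psi> \<circ> (\<Psi> ^^ m) \<in> M \<rightarrow>\<^sub>M M" by (rule measurable_comp[OF Suc.IH assms])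
  then show ?case by (simp add: comp_def)
qed simp

lemma kernel_char:
  fixes f :: "'a \<Rightarrow> complex"
  assumes "\<Psi> \<in> M \<rightarrow>\<^sub>M M" and "f \<in> borel_measurable M"
  shows "(AE x in M. f ((\<Psi> ^^ m) x) = 0) \<longleftrightarrow>
     {x\<in>space M. f x \<noteq> 0} \<in> null_sets (distr M M (\<Psi> ^^ m))"
proof -
  have pm: "(\<Psi> ^^ m) \<in> M \<rightarrow>\<^sub>M M" by (rule funpow_meas[OF assms(1)])
  have S: "{x\<in>space M. f x \<noteq> 0} \<in> sets M" proof -
    have "{x\<in>space M. f x \<noteq> 0} = space M - f -` {0} \<inter> space M" by auto
    then show ?thesis using measurable_sets[OF assms(2) borel_closed[OF closed_singleton[of "0::complex"]]] by (auto intro!: sets.Diff)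
  qed
  have eq: "(\<Psi> ^^ m) -` {x\<in>space M. f x \<noteq> 0} \<inter> space M = {x\<in>space M. \<not> f ((\<Psi> ^^ m) x) = 0}"
    using measurable_space[OF pm] by auto
  have S2: "{x\<in>space M. \<not> f ((\<Psi> ^^ m) x) = 0} \<in> sets M"
    using measurable_sets[OF pm S] eq by simp
  show ?thesis
    unfolding null_sets_distr_iff[OF pm] eq
    using AE_iff_measurable[OF S2 refl] S2 S by (simp add: null_sets_def)
qed

lemma ac_step:
  assumes "\<Psi> \<in> M \<rightarrow>\<^sub>M M" and "nonsingular M \<Psi>"
  shows "null_sets (distr M M (\<Psi> ^^ m)) \<subseteq> null_sets (distr M M (\<Psi> ^^ Suc m))"
proof
  fix S assume S: "S \<in> null_sets (distr M M (\<Psi> ^^ m))"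
  have pm: "(\<Psi> ^^ m) \<in> M \<rightarrow>\<^sub>M M" by (rule funpow_meas[OF assms(1)])
  have pm1: "(\<Psi> ^^ Suc m) \<in> M \<rightarrow>\<^sub>M M" by (rule funpow_meas[OF assms(1)])
  from S have T: "(\<Psi> ^^ m) -` S \<inter> space M \<in> null_sets M" and Ss: "S \<in> sets M"
    using null_sets_distr_iff[OF pm] by auto
  have "(\<Psi> ^^ Suc m) -` S \<inter> space M = \<Psi> -` ((\<Psi> ^^ m) -` S \<inter> space M) \<inter> space M"
    using measurable_space[OF assms(1)] by (auto simp del: funpow.simps simp: funpow_Suc_right)
  moreover have "emeasure M (\<Psi> -` ((\<Psi> ^^ m) -` S \<inter> space M) \<inter> space M) = 0"
    using assms(2) T unfolding nonsingular_def by auto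
  moreover have "(\<Psi> ^^ Suc m) -` S \<inter> space M \<in> sets M"
    using measurable_sets[OF pm1 Ss] .
  ultimately show "S \<in> null_sets (distr M M (\<Psi> ^^ Suc m))"
    unfolding null_sets_distr_iff[OF pm1] using Ss by (simp add: null_sets_def)
qed

lemma indicator_in_L:
  assumes yf: "young_function \<phi>" and wf: "weight_function w"
    and B: "B \<in> sets M" and fin: "emeasure M B < \<infinity>"
  shows "(indicator B :: 'a \<Rightarrow> complex) \<in> orlicz_lorentz M \<phi> w"
proof -
  let ?f = "indicator B :: 'a \<Rightarrow> complex"
  have meas: "?f \<in> borel_measurable M" using B by simp
  have Bsp: "B \<subseteq> space M" using sets.sets_into_space[OF B] .
  have dist: "distrib_fun M ?f s = (if s < 1 then emeasure M B else 0)" if "s > 0" for s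
  proof -
    have "{x \<in> space M. norm (?f x) > s} = (if s < 1 then B else {})"
      using Bsp that by (auto simp: indicator_def)
    then show ?thesis unfolding distrib_fun_def by simp
  qed
  define a where "a = enn2real (emeasure M B)"
  have Ba: "emeasure M B = ennreal a" unfolding a_def using fin
    by (simp add: ennreal_enn2real_if)
  have a0: "a \<ge> 0" unfolding a_def by simp
  have dr1: "decr_rearr M ?f t = 1" if "t < a" "t \<ge> 0" for t
  proof -
    have "{ereal s | s. s > 0 \<and> distrib_fun M ?f s \<le> ennreal t} = {ereal s | s. s \<ge> 1}"
    proof -
      have "(s > 0 \<and> distrib_fun M ?f s \<le> ennreal t) \<longleftrightarrow> s \<ge> 1" for s
      proof (cases "s > 0")
        case True
        have "\<not> ennreal a \<le> ennreal t" using that a0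
          by (simp add: ennreal_le_iff2 not_le)
        then show ?thesis using True dist[OF True] Ba by auto
      qed auto
      then show ?thesis by auto
    qed
    moreover have "Inf {ereal s | s. s \<ge> 1} = 1"
      by (rule antisym) (auto intro!: Inf_lower Inf_greatest)
    ultimately show ?thesis unfolding decr_rearr_def by simp
  qed
  have dr0: "decr_rearr M ?f t = 0" if "t \<ge> a" for t
  proof -
    have "{ereal s | s. s > 0 \<and> distrib_fun M ?f s \<le> ennreal t} = {ereal s | s. s > 0}"
    proof -
      have "(s > 0 \<and> distrib_fun M ?f s \<le> ennreal t) \<longleftrightarrow> s > 0" for s
      proof (cases "s > 0")
        case True
        have "ennreal a \<le> ennreal t" using that by (simp add: ennreal_leI)
        then show ?thesis using True dist[OF True] Ba by auto
      qed auto
      then show ?thesis by auto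
    qed
    moreover have "Inf {ereal s | s. s > 0} = 0"
    proof (rule antisym)
      show "0 \<le> Inf {ereal s | s. s > 0}" by (auto intro!: Inf_greatest)
      show "Inf {ereal s | s. s > 0} \<le> 0"
      proof (rule ereal_le_epsilon2)
        fix e :: real assume "e > 0"
        then show "Inf {ereal s | s. s > 0} \<le> 0 + ereal e" by (auto intro!: Inf_lower)
      qed
    qed
    ultimately show ?thesis unfolding decr_rearr_def by simp
  qed
  have phi0: "\<phi> 0 = 0" using yf unfolding young_function_def by auto
  define b where "b = a + 1"
  have b0: "b > 0" using a0 b_def by simp
  have int: "set_integrable lborel {0<..b} w" using wf b0 unfolding weight_function_def by auto
  then have int2: "set_integrable lborel {0<..b} (\<lambda>t. \<phi> 1 * w t)"
    by (rule set_integrable_mult_right)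
  have "(\<integral>\<^sup>+ t. ennreal (norm (indicator {0<..b} t *\<^sub>R (\<phi> 1 * w t))) \<partial>lborel) < \<infinity>"
    using int2 unfolding set_integrable_def integrable_iff_bounded by simp
  moreover have "set_nn_integral lborel {0<..}
       (\<lambda>t. if decr_rearr M ?f t = \<infinity> then \<infinity>
            else ennreal (\<phi> (1 * real_of_ereal (decr_rearr M ?f t)) * w t))
     \<le> (\<integral>\<^sup>+ t. ennreal (norm (indicator {0<..b} t *\<^sub>R (\<phi> 1 * w t))) \<partial>lborel)"
  proof (rule nn_integral_mono)
    fix t :: real
    show "(if decr_rearr M ?f t = \<infinity> then \<infinity>
            else ennreal (\<phi> (1 * real_of_ereal (decr_rearr M ?f t)) * w t)) * indicator {0<..} t
       \<le> ennreal (norm (indicator {0<..b} t *\<^sub>R (\<phi> 1 * w t)))"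
    proof (cases "t < a \<and> t > 0")
      case True
      then show ?thesis using dr1[of t] True b_def
        by (auto simp: indicator_def intro: ennreal_leI)
    next
      case False
      then show ?thesis using dr0[of t] phi0 by (auto simp: indicator_def)
    qed
  qed
  ultimately have "set_nn_integral lborel {0<..}
       (\<lambda>t. if decr_rearr M ?f t = \<infinity> then \<infinity>
            else ennreal (\<phi> (1 * real_of_ereal (decr_rearr M ?f t)) * w t)) < \<infinity>"
    by (rule le_less_trans[rotated])
  then show ?thesis unfolding orlicz_lorentz_def using meas
    by (auto intro!: exI[of _ 1])
qed

theorem theorem3p5:
  fixes M :: "'a measure" and \<phi> w :: "real \<Rightarrow> real" and \<Psi> :: "'a \<Rightarrow> 'a"
  assumes "sigma_finite_measure M"
    and "young_function \<phi>" and "delta2 \<phi>"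
    and "weight_function w"
    and "\<Psi> \<in> M \<rightarrow>\<^sub>M M" and "nonsingular M \<Psi>"
    and "\<forall>f\<in>orlicz_lorentz M \<phi> w. f \<circ> \<Psi> \<in> orlicz_lorentz M \<phi> w"
  shows "ascent (comp_kernel M (orlicz_lorentz M \<phi> w) \<Psi>) = \<infinity> \<longleftrightarrow>
    (\<forall>m::nat. \<not> equiv_measures (distr M M (\<Psi> ^^ m)) (distr M M (\<Psi> ^^ Suc m)))"
proof -
  let ?L = "orlicz_lorentz M \<phi> w"
  let ?N = "comp_kernel M ?L \<Psi>"
  let ?nu = "\<lambda>m. distr M M (\<Psi> ^^ m)"
  have Lmeas: "?L \<subseteq> borel_measurable M" unfolding orlicz_lorentz_def by auto
  have Nchar: "f \<in> ?N m \<longleftrightarrow> f \<in> ?L \<and> {x\<in>space M. f x \<noteq> 0} \<in> null_sets (?nu m)" for f m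
    using kernel_char[OF assms(5), of f m] Lmeas unfolding comp_kernel_def by auto
  have asc: "ascent ?N = \<infinity> \<longleftrightarrow> (\<forall>m. ?N m \<noteq> ?N (Suc m))"
    unfolding ascent_def by auto
  have step: "null_sets (?nu m) \<subseteq> null_sets (?nu (Suc m))" for m
    using ac_step[OF assms(5,6)] .
  have key: "?N m \<noteq> ?N (Suc m) \<longleftrightarrow> \<not> equiv_measures (?nu m) (?nu (Suc m))" for m
  proof
    assume ne: "?N m \<noteq> ?N (Suc m)"
    show "\<not> equiv_measures (?nu m) (?nu (Suc m))"
    proof
      assume "equiv_measures (?nu m) (?nu (Suc m))"
      then have "null_sets (?nu m) = null_sets (?nu (Suc m))"
        unfolding equiv_measures_def absolutely_continuous_def by auto
      then have "?N m = ?N (Suc m)" using Nchar by blast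
      then show False using ne by simp
    qed
  next
    assume "\<not> equiv_measures (?nu m) (?nu (Suc m))"
    then have "\<not> null_sets (?nu (Suc m)) \<subseteq> null_sets (?nu m)"
      using step[of m] unfolding equiv_measures_def absolutely_continuous_def by auto
    then obtain S where S1: "S \<in> null_sets (?nu (Suc m))" and S0: "S \<notin> null_sets (?nu m)"
      by auto
    have pm: "(\<Psi> ^^ m) \<in> M \<rightarrow>\<^sub>M M" by (rule funpow_meas[OF assms(5)])
    have Ss: "S \<in> sets M" using S1 by (simp add: null_sets_def)
    obtain A :: "nat \<Rightarrow> 'a set" where A: "range A \<subseteq> sets M" "(\<Union>i. A i) = space M"
      "\<And>i. emeasure M (A i) \<noteq> \<infinity>"
      using sigma_finite_measure.sigma_finite[OF assms(1)] by metis
    have "S = (\<Union>i. S \<inter> A i)" using A(2) sets.sets_into_space[OF Ss] by auto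
    then obtain i where Si: "S \<inter> A i \<notin> null_sets (?nu m)"
      using S0 by (metis null_sets_UN)
    have Ai: "A i \<in> sets M" using A(1) by auto
    have SAs: "S \<inter> A i \<in> sets M" using Ss Ai by auto
    have Si1: "S \<inter> A i \<in> null_sets (?nu (Suc m))"
      using null_sets_subset[OF S1] SAs by auto
    have fin: "emeasure M (S \<inter> A i) < \<infinity>"
      using emeasure_mono[of "S \<inter> A i" "A i" M] Ai A(3)[of i] by (simp add: top.not_eq_extremum)
    let ?f = "indicator (S \<inter> A i) :: 'a \<Rightarrow> complex"
    have fL: "?f \<in> ?L" by (rule indicator_in_L[OF assms(2,4) SAs fin])
    have supp: "{x\<in>space M. ?f x \<noteq> 0} = S \<inter> A i"
      using sets.sets_into_space[OF SAs] by (auto simp: indicator_def)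
    have "?f \<in> ?N (Suc m)" "?f \<notin> ?N m"
      using Nchar[of ?f] fL supp Si Si1 by auto
    then show "?N m \<noteq> ?N (Suc m)" by auto
  qed
  show ?thesis using asc key by simp
qed

end
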